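(* Let $N = \sqrt{\lfloor n/2\rfloor \lceil n/2\rceil}$. The minimum value of the normalized Graovac-Ghorbani index over the set of all connected bipartite graphs $G$ on $n \ge 8$ vertices (which equals the minimum of $\mathrm{GG}(G)/\sqrt{n-2}$ over the same set) is $$\begin{cases} 2 & \text{for } n \ge 8 \text{ even},\\ (n-1)^{-1/2} + (n-1)N^{-1} & \text{for } 9 \le n \le 15 \text{ odd},\\ (n+1)N^{-1} & \text{for } n \ge 17 \text{ odd}.\end{cases}$$
   Context: All graphs are finite, simple, undirected and connected. For an edge $uv$ of a graph $G$, let $n_u = |\{w \in V(G) : d(w,u) < d(w,v)\}|$ and $n_v = |\{w \in V(G) : d(w,v) < d(w,u)\}|$, where $d$ is the shortest-path distance. The Graovac-Ghorbani index is $\mathrm{GG}(G) = \sum_{uv \in E(G)} \sqrt{\frac{n_u + n_v - 2}{n_u n_v}}$ and the normalized Graovac-Ghorbani index is $\mathrm{NGG}(G) = \sum_{uv \in E(G)} \frac{1}{\sqrt{n_u n_v}}$. *)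

theory Defs
  imports Complex_Main
begin

text \<open>A simple graph on the vertex set {0..<n}, given by a symmetric irreflexive
  edge relation E (both orientations (u,v) and (v,u) of every edge are in E).\<close>
definition graph_on :: "nat \<Rightarrow> (nat \<times> nat) set \<Rightarrow> bool" where
  "graph_on n E \<longleftrightarrow> E \<subseteq> {..<n} \<times> {..<n} \<and> sym E \<and> irrefl E"

definition connected_graph :: "nat \<Rightarrow> (nat \<times> nat) set \<Rightarrow> bool" where
  "connected_graph n E \<longleftrightarrow> (\<forall>u<n. \<forall>v<n. (u, v) \<in> E\<^sup>*)"

definition bipartite_graph :: "(nat \<times> nat) set \<Rightarrow> bool" where
  "bipartite_graph E \<longleftrightarrow> (\<exists>S. \<forall>(u, v)\<in>E. (u \<in> S) \<noteq> (v \<in> S))"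

definition gdist :: "(nat \<times> nat) set \<Rightarrow> nat \<Rightarrow> nat \<Rightarrow> nat" where
  "gdist E u v = (LEAST k. (u, v) \<in> E ^^ k)"

definition nclose :: "nat \<Rightarrow> (nat \<times> nat) set \<Rightarrow> nat \<Rightarrow> nat \<Rightarrow> nat" where
  "nclose n E u v = card {w \<in> {..<n}. gdist E w u < gdist E w v}"

text \<open>Each undirected edge is counted once, via its orientation with u < v.\<close>
definition NGG :: "nat \<Rightarrow> (nat \<times> nat) set \<Rightarrow> real" where
  "NGG n E = (\<Sum>(u, v)\<in>{(u, v). (u, v) \<in> E \<and> u < v}.
      1 / sqrt (real (nclose n E u v) * real (nclose n E v u)))"

definition GG :: "nat \<Rightarrow> (nat \<times> nat) set \<Rightarrow> real" where
  "GG n E = (\<Sum>(u, v)\<in>{(u, v). (u, v) \<in> E \<and> u < v}.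
      sqrt ((real (nclose n E u v) + real (nclose n E v u) - 2)
            / (real (nclose n E u v) * real (nclose n E v u))))"

definition min_NGG_bip :: "nat \<Rightarrow> real" where
  "min_NGG_bip n =
    (let N = sqrt (real (n div 2) * real ((n + 1) div 2)) in
     if even n then 2
     else if n \<le> 15 then 1 / sqrt (real n - 1) + (real n - 1) / N
     else (real n + 1) / N)"

end

theory Submission
  imports Defs
begin

lemma reach_relpow: "(u,v) \<in> E\<^sup>* \<Longrightarrow> \<exists>k. (u,v) \<in> E ^^ k"
  using rtrancl_power by blast

lemma gdist_le: "(u,v) \<in> E ^^ k \<Longrightarrow> gdist E u v \<le> k"
  unfolding gdist_def by (rule Least_le)

lemma gdist_walk: "(u,v) \<in> E\<^sup>* \<Longrightarrow> (u,v) \<in> E ^^ gdist E u v"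
  unfolding gdist_def using reach_relpow by (metis LeastI)

lemma gdist_self: "gdist E u u = 0"
  using gdist_le[where u=u and v=u and E=E and k=0] by simp

lemma gdist_pos: "(u,v) \<in> E\<^sup>* \<Longrightarrow> u \<noteq> v \<Longrightarrow> gdist E u v > 0"
  using gdist_walk[of u v E] by (cases "gdist E u v") auto

lemma gdist_edge_step: "(w,a) \<in> E\<^sup>* \<Longrightarrow> (a,b) \<in> E \<Longrightarrow> gdist E w b \<le> gdist E w a + 1"
proof -
  assume r: "(w,a) \<in> E\<^sup>*" and e: "(a,b) \<in> E"
  have "(w,b) \<in> E ^^ Suc (gdist E w a)" using gdist_walk[OF r] e by auto
  then show ?thesis using gdist_le by fastforce
qed

lemma parity_walk:
  assumes bip: "\<forall>(u,v)\<in>E. (u \<in> S) \<noteq> (v \<in> S)"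
  shows "(w,u) \<in> E ^^ k \<Longrightarrow> odd k \<longleftrightarrow> ((w \<in> S) \<noteq> (u \<in> S))"
proof (induction k arbitrary: u)
  case 0 then show ?case by simp
next
  case (Suc k)
  then obtain y where "(w,y) \<in> E ^^ k" "(y,u) \<in> E" by auto
  with Suc.IH[of y] bip show ?case by auto
qed

lemma hom_walk:
  fixes f :: "nat \<Rightarrow> nat"
  assumes "\<And>x y. (x,y) \<in> E \<Longrightarrow> (f x, f y) \<in> E'"
  shows "(a,b) \<in> E ^^ k \<Longrightarrow> (f a, f b) \<in> E' ^^ k"
proof (induction k arbitrary: b)
  case 0 then show ?case by simp
next
  case (Suc k)
  then obtain y where "(a,y) \<in> E ^^ k" "(y,b) \<in> E" by auto
  with Suc.IH[of y] assms show ?case by auto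
qed

lemma hom_gdist:
  fixes f :: "nat \<Rightarrow> nat"
  assumes "\<And>x y. (x,y) \<in> E \<Longrightarrow> (f x, f y) \<in> E'" "(a,b) \<in> E\<^sup>*"
  shows "gdist E' (f a) (f b) \<le> gdist E a b"
  by (rule gdist_le, rule hom_walk[OF assms(1) gdist_walk[OF assms(2)]])

lemma walk_into:
  assumes cross: "\<And>a b. (a,b) \<in> E \<Longrightarrow> a \<in> X \<Longrightarrow> b \<notin> X \<Longrightarrow> a = u \<and> b = v"
    and symE: "sym E"
  shows "(w,x) \<in> E ^^ k \<Longrightarrow> w \<notin> X \<Longrightarrow> x \<in> X \<Longrightarrow> \<exists>j<k. (w,v) \<in> E ^^ j"
proof (induction k arbitrary: x)
  case 0 then show ?case by auto
next
  case (Suc k)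
  then obtain y where y: "(w,y) \<in> E ^^ k" "(y,x) \<in> E" by auto
  show ?case
  proof (cases "y \<in> X")
    case True with Suc.IH[OF y(1)] Suc.prems show ?thesis using less_SucI by blast
  next
    case False
    have "(x,y) \<in> E" using y(2) symE by (meson symD)
    with cross[of x y] False Suc.prems have "y = v" by blast
    with y show ?thesis by blast
  qed
qed

lemma walk_out:
  assumes cross: "\<And>a b. (a,b) \<in> E \<Longrightarrow> a \<in> X \<Longrightarrow> b \<notin> X \<Longrightarrow> a = u \<and> b = v"
  shows "(x,w) \<in> E ^^ k \<Longrightarrow> x \<in> X \<Longrightarrow> w \<notin> X \<Longrightarrow> \<exists>j<k. (x,u) \<in> E ^^ j"
proof (induction k arbitrary: w)
  case 0 then show ?case by auto
next
  case (Suc k)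
  then obtain y where y: "(x,y) \<in> E ^^ k" "(y,w) \<in> E" by auto
  show ?case
  proof (cases "y \<in> X")
    case False with Suc.IH[OF y(1)] Suc.prems show ?thesis using less_SucI by blast
  next
    case True
    with cross[of y w] y(2) Suc.prems have "y = u" by blast
    with y show ?thesis by blast
  qed
qed


locale cbg =
  fixes n :: nat and E :: "(nat \<times> nat) set" and S :: "nat set"
  assumes g: "graph_on n E" and c: "connected_graph n E"
    and bip: "\<forall>(u,v)\<in>E. (u \<in> S) \<noteq> (v \<in> S)" and n3: "n \<ge> 3"
begin

lemma E_sub: "(a,b) \<in> E \<Longrightarrow> a < n \<and> b < n"
  using g unfolding graph_on_def by auto

lemma symE: "sym E" using g unfolding graph_on_def by auto

lemma E_sym: "(a,b) \<in> E \<Longrightarrow> (b,a) \<in> E" using symE by (meson symD)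

lemma E_irr: "(a,b) \<in> E \<Longrightarrow> a \<noteq> b"
  using g unfolding graph_on_def irrefl_def by auto

lemma reach: "a < n \<Longrightarrow> b < n \<Longrightarrow> (a,b) \<in> E\<^sup>*"
  using c unfolding connected_graph_def by auto

lemma dist_edge:
  assumes e: "(u,v) \<in> E" and w: "w < n"
  shows "gdist E w u \<noteq> gdist E w v" "gdist E w v \<le> gdist E w u + 1"
    "gdist E w u \<le> gdist E w v + 1"
proof -
  have un: "u < n" "v < n" using E_sub[OF e] by auto
  show "gdist E w v \<le> gdist E w u + 1" using gdist_edge_step[OF reach[OF w un(1)] e] .
  show "gdist E w u \<le> gdist E w v + 1" using gdist_edge_step[OF reach[OF w un(2)] E_sym[OF e]] .
  have p1: "odd (gdist E w u) \<longleftrightarrow> ((w \<in> S) \<noteq> (u \<in> S))"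
    using parity_walk[OF bip gdist_walk[OF reach[OF w un(1)]]] .
  have p2: "odd (gdist E w v) \<longleftrightarrow> ((w \<in> S) \<noteq> (v \<in> S))"
    using parity_walk[OF bip gdist_walk[OF reach[OF w un(2)]]] .
  have "(u \<in> S) \<noteq> (v \<in> S)" using bip e by auto
  then show "gdist E w u \<noteq> gdist E w v" using p1 p2 by auto
qed

lemma nclose_sum:
  assumes e: "(u,v) \<in> E"
  shows "nclose n E u v + nclose n E v u = n"
proof -
  let ?A = "{w \<in> {..<n}. gdist E w u < gdist E w v}"
  let ?B = "{w \<in> {..<n}. gdist E w v < gdist E w u}"
  have "?A \<union> ?B = {..<n}"
  proof (intro equalityI subsetI)
    fix w assume "w \<in> {..<n}"
    then have "w < n" "gdist E w u \<noteq> gdist E w v" using dist_edge(1)[OF e] by auto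
    then show "w \<in> ?A \<union> ?B" by (auto simp: nat_neq_iff)
  qed auto
  moreover have "?A \<inter> ?B = {}" by auto
  moreover have "finite ?A" "finite ?B" by auto
  ultimately have "card ?A + card ?B = card {..<n}"
    using card_Un_disjoint[of ?A ?B] by simp
  then have "card ?A + card ?B = n" by simp
  then show ?thesis unfolding nclose_def .
qed

lemma nclose_pos:
  assumes e: "(u,v) \<in> E"
  shows "nclose n E u v \<ge> 1"
proof -
  have un: "u < n" "v < n" using E_sub[OF e] by auto
  have "gdist E u v > 0" using gdist_pos[OF reach[OF un]] E_irr[OF e] by auto
  then have "u \<in> {w \<in> {..<n}. gdist E w u < gdist E w v}" using un gdist_self[of E u] by auto
  moreover have "finite {w \<in> {..<n}. gdist E w u < gdist E w v}" by simp
  ultimately have "card {w \<in> {..<n}. gdist E w u < gdist E w v} > 0"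
    using card_gt_0_iff by blast
  then show ?thesis unfolding nclose_def by simp
qed

lemma bridge:
  assumes X: "X \<subseteq> {..<n}" and uX: "u \<in> X" and vX: "v \<notin> X" and e: "(u,v) \<in> E"
    and cross: "\<And>a b. (a,b) \<in> E \<Longrightarrow> a \<in> X \<Longrightarrow> b \<notin> X \<Longrightarrow> a = u \<and> b = v"
  shows "nclose n E u v = card X"
proof -
  have un: "u < n" "v < n" using E_sub[OF e] by auto
  have "{w \<in> {..<n}. gdist E w u < gdist E w v} = X"
  proof (intro equalityI subsetI)
    fix w assume w: "w \<in> {w \<in> {..<n}. gdist E w u < gdist E w v}"
    show "w \<in> X"
    proof (rule ccontr)
      assume "w \<notin> X"
      from walk_into[OF cross symE gdist_walk[OF reach[of w u]] this uX] w un
      obtain j where "j < gdist E w u" "(w,v) \<in> E ^^ j" by auto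
      then have "gdist E w v < gdist E w u" using gdist_le by (metis le_less_trans)
      with w show False by auto
    qed
  next
    fix x assume x: "x \<in> X"
    then have xn: "x < n" using X by auto
    from walk_out[OF cross gdist_walk[OF reach[OF xn un(2)]] x vX]
    obtain j where "j < gdist E x v" "(x,u) \<in> E ^^ j" by auto
    then have "gdist E x u < gdist E x v" using gdist_le by (metis le_less_trans)
    with xn show "x \<in> {w \<in> {..<n}. gdist E w u < gdist E w v}" by auto
  qed
  then show ?thesis unfolding nclose_def by simp
qed

lemma closed_all:
  assumes X: "X \<subseteq> {..<n}" and x: "x \<in> X"
    and cl: "\<And>a b. (a,b) \<in> E \<Longrightarrow> a \<in> X \<Longrightarrow> b \<in> X"
  shows "card X = n"
proof -
  have "{..<n} \<subseteq> X"
  proof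
    fix w assume "w \<in> {..<n}"
    then have "(x,w) \<in> E\<^sup>*" using reach X x by auto
    then show "w \<in> X" using x cl by (induction rule: rtrancl_induct) auto
  qed
  with X have "X = {..<n}" by auto
  then show ?thesis by simp
qed

lemma auto_gdist:
  assumes inv: "\<And>x. x < n \<Longrightarrow> \<sigma> x < n \<and> \<sigma> (\<sigma> x) = x"
    and hom: "\<And>x y. (x,y) \<in> E \<Longrightarrow> (\<sigma> x, \<sigma> y) \<in> E"
    and a: "a < n" and b: "b < n"
  shows "gdist E (\<sigma> a) (\<sigma> b) = gdist E a b"
proof -
  have 1: "gdist E (\<sigma> a) (\<sigma> b) \<le> gdist E a b" using hom_gdist[OF hom reach[OF a b]] .
  have sa: "\<sigma> a < n" "\<sigma> b < n" using inv a b by auto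
  have "gdist E (\<sigma> (\<sigma> a)) (\<sigma> (\<sigma> b)) \<le> gdist E (\<sigma> a) (\<sigma> b)"
    by (rule hom_gdist[OF hom reach[OF sa]])
  moreover have "\<sigma> (\<sigma> a) = a" "\<sigma> (\<sigma> b) = b" using inv a b by auto
  ultimately show ?thesis using 1 by simp
qed

lemma auto_nclose:
  assumes inv: "\<And>x. x < n \<Longrightarrow> \<sigma> x < n \<and> \<sigma> (\<sigma> x) = x"
    and hom: "\<And>x y. (x,y) \<in> E \<Longrightarrow> (\<sigma> x, \<sigma> y) \<in> E"
    and u: "u < n" and v: "v < n"
  shows "nclose n E (\<sigma> u) (\<sigma> v) = nclose n E u v"
proof -
  let ?A = "{w \<in> {..<n}. gdist E w u < gdist E w v}"
  have "{w \<in> {..<n}. gdist E w (\<sigma> u) < gdist E w (\<sigma> v)} = \<sigma> ` ?A"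
  proof (intro equalityI subsetI)
    fix w assume w: "w \<in> {w \<in> {..<n}. gdist E w (\<sigma> u) < gdist E w (\<sigma> v)}"
    then have wn: "w < n" by auto
    have sw: "\<sigma> w < n" and ssw: "\<sigma> (\<sigma> w) = w" using inv[OF wn] by auto
    have "gdist E (\<sigma> (\<sigma> w)) (\<sigma> u) = gdist E (\<sigma> w) u" "gdist E (\<sigma> (\<sigma> w)) (\<sigma> v) = gdist E (\<sigma> w) v"
      using auto_gdist[OF inv hom sw u] auto_gdist[OF inv hom sw v] by auto
    then have "\<sigma> w \<in> ?A" using w sw ssw by auto
    moreover have "w = \<sigma> (\<sigma> w)" using ssw by auto
    ultimately show "w \<in> \<sigma> ` ?A" by (rule rev_image_eqI)
  next
    fix w assume "w \<in> \<sigma> ` ?A"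
    then obtain y where y: "y \<in> ?A" "w = \<sigma> y" by auto
    then have yn: "y < n" by auto
    have "gdist E (\<sigma> y) (\<sigma> u) = gdist E y u" "gdist E (\<sigma> y) (\<sigma> v) = gdist E y v"
      using auto_gdist[OF inv hom yn u] auto_gdist[OF inv hom yn v] by auto
    then show "w \<in> {w \<in> {..<n}. gdist E w (\<sigma> u) < gdist E w (\<sigma> v)}"
      using y yn inv[OF yn] by auto
  qed
  moreover have "inj_on \<sigma> ?A"
  proof (rule inj_onI)
    fix x y assume "x \<in> ?A" "y \<in> ?A" "\<sigma> x = \<sigma> y"
    then have "x < n" "y < n" by auto
    then show "x = y" using inv[of x] inv[of y] \<open>\<sigma> x = \<sigma> y\<close> by metis
  qed
  ultimately show ?thesis unfolding nclose_def by (simp add: card_image)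
qed

end

definition N2 :: "nat \<Rightarrow> nat" where "N2 n = (n div 2) * ((n + 1) div 2)"

lemma prod_le_N2:
  fixes a b :: nat assumes "a + b = n" shows "a * b \<le> N2 n"
proof -
  have "4 * (a * b) \<le> 4 * N2 n"
  proof (cases "even n")
    case True
    then obtain k where k: "n = 2*k" by auto
    then have N: "N2 n = k*k" unfolding N2_def by auto
    have "int (4*(a*b)) \<le> int (4*(k*k))"
    proof -
      have s: "int a + int b = 2 * int k" using assms k by simp
      have "int (4*(a*b)) = (int a + int b)^2 - (int a - int b)^2" by (simp add: power2_eq_square algebra_simps)
      also have "\<dots> \<le> (int a + int b)^2" by simp
      also have "\<dots> = int (4*(k*k))" using s by (simp add: power2_eq_square)
      finally show ?thesis .
    qed
    then show ?thesis using N by linarith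
  next
    case False
    then obtain k where k: "n = 2*k+1" using oddE by blast
    then have N: "N2 n = k*(k+1)" unfolding N2_def by auto
    have ib: "int b = 2*int k + 1 - int a" using assms k by simp
    have "int a * int b \<le> int k * (int k + 1)"
    proof (cases "a \<le> k")
      case True
      have "int a * int b - int k * (int k + 1) = int a * (2*int k + 1 - int a) - int k * (int k + 1)"
        by (simp add: ib)
      also have "\<dots> = - ((int k - int a) * (int k + 1 - int a))" by (simp add: algebra_simps)
      finally have "int a * int b - int k * (int k + 1) = - ((int k - int a) * (int k + 1 - int a))" .
      moreover have "(int k - int a) * (int k + 1 - int a) \<ge> 0" using True by simp
      ultimately show ?thesis by linarith
    next
      case False
      have "int a * int b - int k * (int k + 1) = int a * (2*int k + 1 - int a) - int k * (int k + 1)"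
        by (simp add: ib)
      also have "\<dots> = - ((int a - int k) * (int a - int k - 1))" by (simp add: algebra_simps)
      finally have "int a * int b - int k * (int k + 1) = - ((int a - int k) * (int a - int k - 1))" .
      moreover have "(int a - int k) * (int a - int k - 1) \<ge> 0" using False by simp
      ultimately show ?thesis by linarith
    qed
    then have "a * b \<le> k * (k+1)" by (metis of_nat_add of_nat_le_iff of_nat_mult of_nat_1)
    then show ?thesis using N by simp
  qed
  then show ?thesis by simp
qed

definition und :: "nat \<times> nat \<Rightarrow> nat \<times> nat" where "und e = (min (fst e) (snd e), max (fst e) (snd e))"

definition UE :: "(nat \<times> nat) set \<Rightarrow> (nat \<times> nat) set" where "UE E = {(u, v). (u, v) \<in> E \<and> u < v}"

definition tt :: "nat \<Rightarrow> (nat \<times> nat) set \<Rightarrow> nat \<times> nat \<Rightarrow> real" where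
  "tt n E e = 1 / sqrt (real (nclose n E (fst e) (snd e)) * real (nclose n E (snd e) (fst e)))"

lemma NGG_tt: "NGG n E = sum (tt n E) (UE E)"
  unfolding NGG_def UE_def tt_def by (rule sum.cong) auto

lemma tt_und: "tt n E (und e) = tt n E e"
  unfolding tt_def und_def by (cases "fst e \<le> snd e") (auto simp: min_def max_def mult.commute)

lemma und_eq: "und (a,b) = und (c,d) \<Longrightarrow> a \<noteq> b \<Longrightarrow> (a = c \<and> b = d) \<or> (a = d \<and> b = c)"
  unfolding und_def by (auto simp: min_def max_def split: if_splits)

definition deg :: "(nat \<times> nat) set \<Rightarrow> nat \<Rightarrow> nat" where "deg E v = card (E `` {v})"

lemma sum_lb:
  fixes f :: "'a \<Rightarrow> real"
  assumes "finite U" "F \<subseteq> U" "\<And>e. e \<in> U \<Longrightarrow> f e \<ge> c"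
  shows "sum f U \<ge> sum f F + real (card U - card F) * c"
proof -
  have fin: "finite F" using assms finite_subset by blast
  have "sum f U = sum f F + sum f (U - F)" using assms fin
    by (metis add.commute sum.subset_diff)
  moreover have "sum f (U - F) \<ge> real (card (U - F)) * c"
    using sum_mono[of "U - F" "\<lambda>_. c" f] assms by auto
  moreover have "card (U - F) = card U - card F" using assms fin card_Diff_subset by blast
  ultimately show ?thesis by simp
qed

context cbg begin

lemma finE: "finite E"
proof -
  have "E \<subseteq> {..<n} \<times> {..<n}" using E_sub by auto
  then show ?thesis using finite_subset by blast
qed

lemma finU: "finite (UE E)" unfolding UE_def using finE
  by (metis (no_types, lifting) case_prodE finite_subset mem_Collect_eq subsetI)

lemma und_in_U: "e \<in> E \<Longrightarrow> und e \<in> UE E"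
proof -
  assume e: "e \<in> E"
  obtain a b where ab: "e = (a,b)" by (cases e)
  have "a \<noteq> b" using E_irr e ab by auto
  then show ?thesis using e E_sym[of a b] ab unfolding und_def UE_def by (auto simp: min_def max_def)
qed

lemma tt_lb: "e \<in> E \<Longrightarrow> tt n E e \<ge> 1 / sqrt (real (N2 n))"
proof -
  assume e: "e \<in> E"
  obtain u v where uv: "e = (u,v)" by (cases e)
  have s: "nclose n E u v + nclose n E v u = n" using nclose_sum e uv by auto
  have p: "nclose n E u v \<ge> 1" "nclose n E v u \<ge> 1" using nclose_pos e E_sym uv by auto
  have le: "nclose n E u v * nclose n E v u \<le> N2 n" using prod_le_N2[OF s] .
  have pos: "real (nclose n E u v) * real (nclose n E v u) > 0" using p by simp
  have "sqrt (real (nclose n E u v) * real (nclose n E v u)) \<le> sqrt (real (N2 n))"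
    using le by (metis of_nat_le_iff of_nat_mult real_sqrt_le_mono)
  then show ?thesis unfolding tt_def uv using pos
    by (simp add: frac_le)
qed

lemma tt_U_lb: "e \<in> UE E \<Longrightarrow> tt n E e \<ge> 1 / sqrt (real (N2 n))"
  using tt_lb unfolding UE_def by auto

lemma NGG_lb:
  assumes "F \<subseteq> UE E"
  shows "NGG n E \<ge> sum (tt n E) F + real (card (UE E) - card F) * (1 / sqrt (real (N2 n)))"
  unfolding NGG_tt by (rule sum_lb[OF finU assms tt_U_lb])

end

context cbg begin

lemma fin_nb: "finite (E `` {v})"
  using finE by (simp add: finite_Image)

lemma parent_ex:
  assumes w: "w < n" "w \<noteq> 0"
  shows "\<exists>p. (p,w) \<in> E \<and> gdist E 0 p + 1 = gdist E 0 w"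
proof -
  have n0: "0 < n" using w by auto
  have r: "(0,w) \<in> E\<^sup>*" using reach[OF n0 w(1)] .
  have pos: "gdist E 0 w > 0" using gdist_pos[OF r] w by auto
  then obtain j where j: "gdist E 0 w = Suc j" using gr0_implies_Suc by blast
  have "(0,w) \<in> E ^^ Suc j" using gdist_walk[OF r] j by simp
  then obtain p where p: "(0,p) \<in> E ^^ j" "(p,w) \<in> E" by auto
  have "gdist E 0 p \<le> j" using gdist_le[OF p(1)] .
  moreover have "gdist E 0 w \<le> gdist E 0 p + 1"
    using gdist_edge_step[OF reach[OF n0] p(2)] E_sub[OF p(2)] by auto
  ultimately have "gdist E 0 p + 1 = gdist E 0 w" using j by simp
  with p show ?thesis by blast
qed

lemma card_U_ge: "card (UE E) \<ge> n - 1"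
proof -
  define par where "par w = (SOME p. (p,w) \<in> E \<and> gdist E 0 p + 1 = gdist E 0 w)" for w
  have par: "(par w, w) \<in> E \<and> gdist E 0 (par w) + 1 = gdist E 0 w" if "w < n" "w \<noteq> 0" for w
    unfolding par_def using someI_ex[OF parent_ex[OF that]] .
  define f where "f w = und (par w, w)" for w
  have "inj_on f {1..<n}"
  proof (rule inj_onI)
    fix w w' assume w: "w \<in> {1..<n}" and w': "w' \<in> {1..<n}" and eq: "f w = f w'"
    have pw: "(par w, w) \<in> E" "gdist E 0 (par w) + 1 = gdist E 0 w" using par[of w] w by auto
    have pw': "(par w', w') \<in> E" "gdist E 0 (par w') + 1 = gdist E 0 w'" using par[of w'] w' by auto
    have "par w \<noteq> w" using E_irr[OF pw(1)] .
    from und_eq[OF eq[unfolded f_def] this]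
    show "w = w'" using pw pw' by auto
  qed
  moreover have "f ` {1..<n} \<subseteq> UE E"
    using par und_in_U unfolding f_def by auto
  ultimately have "card {1..<n} \<le> card (UE E)" using card_inj_on_le finU by blast
  then show ?thesis by simp
qed

lemma card_E: "card E = 2 * card (UE E)"
proof -
  have "E = UE E \<union> prod.swap ` UE E"
  proof (intro equalityI subsetI)
    fix e assume e: "e \<in> E"
    obtain a b where ab: "e = (a,b)" by (cases e)
    have "a \<noteq> b" using E_irr e ab by auto
    then show "e \<in> UE E \<union> prod.swap ` UE E"
    proof (cases "a < b")
      case True then show ?thesis using e ab unfolding UE_def by auto
    next
      case False
      then have "(b,a) \<in> UE E" using e ab E_sym \<open>a \<noteq> b\<close> unfolding UE_def by auto
      then show ?thesis using ab by (metis UnI2 image_eqI swap_simp)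
    qed
  next
    fix e assume "e \<in> UE E \<union> prod.swap ` UE E"
    then show "e \<in> E" unfolding UE_def using E_sym by auto
  qed
  moreover have "UE E \<inter> prod.swap ` UE E = {}" unfolding UE_def by auto
  moreover have "card (prod.swap ` UE E) = card (UE E)"
    by (rule card_image) (simp add: inj_on_def prod_eq_iff)
  moreover have "finite (prod.swap ` UE E)" using finU by simp
  ultimately show ?thesis using finU card_Un_disjoint[of "UE E" "prod.swap ` UE E"] by simp
qed

lemma E_Sigma: "E = Sigma {..<n} (\<lambda>v. E `` {v})"
  using E_sub by auto

lemma sum_deg: "(\<Sum>v<n. deg E v) = card E"
proof -
  have "card E = card (Sigma {..<n} (\<lambda>v. E `` {v}))" using E_Sigma by simp
  also have "\<dots> = (\<Sum>v<n. card (E `` {v}))" using fin_nb by simp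
  finally show ?thesis unfolding deg_def by simp
qed

lemma sum_deg_S: "(\<Sum>v\<in>S \<inter> {..<n}. deg E v) = card (UE E)"
proof -
  have "(\<Sum>v\<in>S \<inter> {..<n}. deg E v) = card (Sigma (S \<inter> {..<n}) (\<lambda>v. E `` {v}))"
    unfolding deg_def using fin_nb by simp
  also have "Sigma (S \<inter> {..<n}) (\<lambda>v. E `` {v}) = {e \<in> E. fst e \<in> S}"
    using E_sub by auto
  also have "card {e \<in> E. fst e \<in> S} = card (UE E)"
  proof -
    define g where "g e = (if fst e \<in> S then e else prod.swap e)" for e :: "nat \<times> nat"
    have "bij_betw g (UE E) {e \<in> E. fst e \<in> S}"
    proof (rule bij_betw_imageI)
      show "inj_on g (UE E)"
      proof (rule inj_onI)
        fix x y assume x: "x \<in> UE E" and y: "y \<in> UE E" and eq: "g x = g y"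
        obtain a b where ab: "x = (a,b)" "a < b" using x unfolding UE_def by auto
        obtain c d where cd: "y = (c,d)" "c < d" using y unfolding UE_def by auto
        show "x = y" using eq ab cd unfolding g_def by (auto split: if_splits)
      qed
      show "g ` UE E = {e \<in> E. fst e \<in> S}"
      proof (intro equalityI subsetI)
        fix e assume "e \<in> g ` UE E"
        then obtain x where x: "x \<in> UE E" "e = g x" by auto
        obtain a b where ab: "x = (a,b)" "(a,b) \<in> E" using x unfolding UE_def by auto
        have "(a \<in> S) \<noteq> (b \<in> S)" using bip ab by auto
        then show "e \<in> {e \<in> E. fst e \<in> S}" using x ab E_sym[of a b] unfolding g_def by auto
      next
        fix e assume e: "e \<in> {e \<in> E. fst e \<in> S}"
        obtain a b where ab: "e = (a,b)" "(a,b) \<in> E" "a \<in> S" using e by (cases e) auto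
        have bS: "b \<notin> S" using bip ab by auto
        have ne: "a \<noteq> b" using E_irr ab by auto
        show "e \<in> g ` UE E"
        proof (cases "a < b")
          case True
          then have "(a,b) \<in> UE E" using ab unfolding UE_def by auto
          moreover have "g (a,b) = e" using ab unfolding g_def by auto
          ultimately show ?thesis by (metis image_eqI)
        next
          case False
          then have "(b,a) \<in> UE E" using ab E_sym ne unfolding UE_def by auto
          moreover have "g (b,a) = e" using ab bS unfolding g_def by auto
          ultimately show ?thesis by (metis image_eqI)
        qed
      qed
    qed
    then show ?thesis by (metis bij_betw_same_card)
  qed
  finally show ?thesis .
qed

lemma deg_pos: "v < n \<Longrightarrow> deg E v \<ge> 1"
proof -
  assume v: "v < n"
  define w :: nat where "w = (if v = 0 then 1 else 0)"
  have w: "w < n" "w \<noteq> v" using n3 unfolding w_def by auto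
  have "(v,w) \<in> E\<^sup>*" using reach v w by auto
  then obtain y where "(v,y) \<in> E" using w(2) by (metis converse_rtranclE)
  then have "y \<in> E `` {v}" by auto
  then show ?thesis unfolding deg_def using fin_nb
    by (metis One_nat_def Suc_leI card_gt_0_iff empty_iff)
qed

lemma leaf:
  assumes v: "v < n" and d: "deg E v = 1"
  obtains p where "E `` {v} = {p}" "(v,p) \<in> E" "nclose n E v p = 1" "nclose n E p v = n - 1"
proof -
  obtain p where p: "E `` {v} = {p}" using d unfolding deg_def by (metis card_1_singletonE)
  then have e: "(v,p) \<in> E" by auto
  have pn: "p < n" using E_sub[OF e] by auto
  have pv: "p \<noteq> v" using E_irr[OF e] by auto
  have "nclose n E v p = card {v}"
    by (rule bridge) (use v pv e p in auto)
  then have 1: "nclose n E v p = 1" by simp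
  then have "nclose n E p v = n - 1" using nclose_sum[OF e] by simp
  with that p e 1 show ?thesis by blast
qed

end

context cbg begin

definition Lv where "Lv = {v. v < n \<and> deg E v = 1}"

lemma finLv: "finite Lv" unfolding Lv_def by simp

lemma und_ne:
  assumes "e \<in> E" "e' \<in> E" "e \<noteq> e'"
    "nclose n E (fst e) (snd e) \<noteq> nclose n E (snd e') (fst e')"
  shows "und e \<noteq> und e'"
proof
  assume eq: "und e = und e'"
  obtain a b where ab: "e = (a,b)" by (cases e)
  obtain c d where cd: "e' = (c,d)" by (cases e')
  have "a \<noteq> b" using E_irr assms(1) ab by auto
  from und_eq[OF eq[unfolded ab cd] this] assms ab cd show False by auto
qed

lemma leaf_F:
  obtains F where "F \<subseteq> UE E" "card F = card Lv" "sum (tt n E) F = real (card Lv) * (1 / sqrt (real n - 1))"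
proof -
  define nb where "nb v = (SOME p. E `` {v} = {p})" for v
  have nb: "(v, nb v) \<in> E \<and> nclose n E v (nb v) = 1 \<and> nclose n E (nb v) v = n - 1" if "v \<in> Lv" for v
  proof -
    from that have v: "v < n" "deg E v = 1" unfolding Lv_def by auto
    obtain p where p: "E `` {v} = {p}" "(v,p) \<in> E" "nclose n E v p = 1" "nclose n E p v = n - 1"
      using leaf[OF v] by blast
    have "nb v = p" unfolding nb_def using p(1) by (metis (mono_tags, lifting) someI the_elem_eq the_elem_def)
    then show ?thesis using p by auto
  qed
  define F where "F = (\<lambda>v. und (v, nb v)) ` Lv"
  have inj: "inj_on (\<lambda>v. und (v, nb v)) Lv"
  proof (rule inj_onI)
    fix v w assume v: "v \<in> Lv" and w: "w \<in> Lv" and eq: "und (v, nb v) = und (w, nb w)"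
    show "v = w"
    proof (rule ccontr)
      assume "v \<noteq> w"
      moreover have "nclose n E v (nb v) \<noteq> nclose n E (nb w) w" using nb[OF v] nb[OF w] n3 by auto
      ultimately have "und (v, nb v) \<noteq> und (w, nb w)"
        using und_ne[of "(v, nb v)" "(w, nb w)"] nb[OF v] nb[OF w] by auto
      with eq show False by simp
    qed
  qed
  have FU: "F \<subseteq> UE E" unfolding F_def using nb und_in_U by auto
  have cF: "card F = card Lv" unfolding F_def using card_image[OF inj] .
  have "sum (tt n E) F = (\<Sum>v\<in>Lv. tt n E (und (v, nb v)))"
    unfolding F_def using sum.reindex[OF inj] by simp
  also have "\<dots> = (\<Sum>v\<in>Lv. 1 / sqrt (real n - 1))"
  proof (rule sum.cong)
    fix v assume v: "v \<in> Lv"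
    have "n \<ge> 1" using n3 by simp
    then have "tt n E (v, nb v) = 1 / sqrt (real n - 1)"
      unfolding tt_def using nb[OF v] by (simp add: of_nat_diff)
    then show "tt n E (und (v, nb v)) = 1 / sqrt (real n - 1)" using tt_und by metis
  qed simp
  finally have "sum (tt n E) F = real (card Lv) * (1 / sqrt (real n - 1))" by simp
  with that FU cF show ?thesis by blast
qed

lemma leaf_bound:
  "NGG n E \<ge> real (card Lv) * (1 / sqrt (real n - 1))
     + real (card (UE E) - card Lv) * (1 / sqrt (real (N2 n)))"
proof -
  obtain F where "F \<subseteq> UE E" "card F = card Lv" "sum (tt n E) F = real (card Lv) * (1 / sqrt (real n - 1))"
    using leaf_F by blast
  with NGG_lb[of F] show ?thesis by simp
qed

lemma Lv_le_U: "card Lv \<le> card (UE E)"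
proof -
  obtain F where "F \<subseteq> UE E" "card F = card Lv" using leaf_F by blast
  then show ?thesis using card_mono[OF finU] by metis
qed

lemma deg_sum_bound: "2 * card (UE E) + card Lv \<ge> 2 * n"
proof -
  have "(\<Sum>v<n. (if v \<in> Lv then 1 else 2)) \<le> (\<Sum>v<n. deg E v)"
  proof (rule sum_mono)
    fix v assume "v \<in> {..<n}"
    then show "(if v \<in> Lv then 1 else 2) \<le> deg E v" using deg_pos[of v] unfolding Lv_def by auto
  qed
  moreover have "(\<Sum>v<n. (if v \<in> Lv then 1 else 2 :: nat)) + card Lv = 2 * n"
  proof -
    have sub: "Lv \<subseteq> {..<n}" unfolding Lv_def by auto
    have "(\<Sum>v<n. (if v \<in> Lv then 1 else 2 :: nat)) = (\<Sum>v<n. 2 - (if v \<in> Lv then 1 else 0))"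
      by (rule sum.cong) auto
    also have "\<dots> = (\<Sum>v<n. 2) - (\<Sum>v<n. (if v \<in> Lv then 1 else 0 :: nat))"
      by (rule sum_subtractf_nat) auto
    also have "(\<Sum>v<n. (if v \<in> Lv then 1 else 0 :: nat)) = card Lv"
      using sub by (simp add: sum.If_cases Int_absorb1)
    finally show ?thesis using sub card_mono[OF _ sub] by simp
  qed
  ultimately show ?thesis using sum_deg card_E by simp
qed

end

context cbg begin

lemma odd_leaf:
  assumes "odd n" "card (UE E) \<le> n"
  shows "card Lv \<ge> 1"
proof (rule ccontr)
  assume "\<not> card Lv \<ge> 1"
  then have "card Lv = 0" by simp
  then have L0: "Lv = {}" using finLv by simp
  have d2: "deg E v \<ge> 2" if "v < n" for v
    using deg_pos[OF that] L0 that unfolding Lv_def by fastforce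
  define S' where "S' = S \<inter> {..<n}"
  define T' where "T' = {..<n} - S'"
  have fin: "finite S'" "finite T'" unfolding S'_def T'_def by auto
  have un: "S' \<union> T' = {..<n}" "S' \<inter> T' = {}" unfolding S'_def T'_def by auto
  have cn: "card S' + card T' = n"
    using card_Un_disjoint[OF fin un(2)] un(1) by simp
  have sS: "sum (deg E) S' = card (UE E)" using sum_deg_S unfolding S'_def .
  have "sum (deg E) S' + sum (deg E) T' = sum (deg E) {..<n}"
    using sum.union_disjoint[OF fin un(2), of "deg E"] un(1) by simp
  then have sT: "sum (deg E) T' = card (UE E)" using sS sum_deg card_E by simp
  have "sum (\<lambda>_. 2) S' \<le> sum (deg E) S'" by (rule sum_mono) (use d2 in \<open>auto simp: S'_def\<close>)
  then have a: "2 * card S' \<le> card (UE E)" using sS by simp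
  have "sum (\<lambda>_. 2) T' \<le> sum (deg E) T'" by (rule sum_mono) (use d2 in \<open>auto simp: T'_def\<close>)
  then have b: "2 * card T' \<le> card (UE E)" using sT by simp
  from a b cn assms show False by presburger
qed

lemma deg_exact:
  assumes "card (UE E) = n - 1" "card Lv = 2" "v < n" "v \<notin> Lv"
  shows "deg E v = 2"
proof -
  define f where "f v = (if v \<in> Lv then 1 else 2 :: nat)" for v
  have le: "\<forall>v\<in>{..<n}. f v \<le> deg E v" using deg_pos unfolding f_def Lv_def by fastforce
  have sub: "Lv \<subseteq> {..<n}" unfolding Lv_def by auto
  have "(\<Sum>v<n. f v) = (\<Sum>v<n. 2 - (if v \<in> Lv then 1 else 0 :: nat))"
    unfolding f_def by (rule sum.cong) auto
  also have "\<dots> = (\<Sum>v<n. 2) - (\<Sum>v<n. (if v \<in> Lv then 1 else 0 :: nat))"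
    by (rule sum_subtractf_nat) auto
  also have "(\<Sum>v<n. (if v \<in> Lv then 1 else 0 :: nat)) = card Lv"
    using sub by (simp add: sum.If_cases Int_absorb1)
  finally have sf: "(\<Sum>v<n. f v) = 2 * n - 2" using assms(2) by simp
  have "(\<Sum>v<n. deg E v - f v) = (\<Sum>v<n. deg E v) - (\<Sum>v<n. f v)"
    by (rule sum_subtractf_nat) (use le in auto)
  also have "\<dots> = 0" using sf sum_deg card_E assms(1) n3 by simp
  finally have "deg E v - f v = 0" using assms(3) by simp
  moreover have "f v = 2" using assms(4) unfolding f_def by simp
  moreover have "deg E v \<noteq> 1" using assms(3,4) unfolding Lv_def by auto
  moreover have "deg E v \<ge> 1" using deg_pos assms(3) by simp
  ultimately show ?thesis by simp
qed

end

context cbg begin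

lemma und_ne2:
  assumes "e \<in> E" "e' \<in> E"
    "nclose n E (fst e) (snd e) \<noteq> nclose n E (fst e') (snd e')"
    "nclose n E (fst e) (snd e) \<noteq> nclose n E (snd e') (fst e')"
  shows "und e \<noteq> und e'"
  using und_ne[OF assms(1,2)] assms(3,4) by auto

lemma two_nb:
  assumes "deg E p = 2" "(p,l) \<in> E"
  obtains q where "E `` {p} = {l, q}" "q \<noteq> l"
proof -
  obtain x y where xy: "E `` {p} = {x,y}" "x \<noteq> y" using assms(1) unfolding deg_def card_2_iff by blast
  have "l \<in> E `` {p}" using assms(2) by auto
  then have "E `` {p} = {l, if l = x then y else x} \<and> (if l = x then y else x) \<noteq> l"
    using xy by auto
  with that show ?thesis by blast
qed

lemma chain:
  assumes L: "l \<in> Lv" and U: "card (UE E) = n - 1" and L2: "card Lv = 2" and n9: "n \<ge> 9"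
  obtains p q r where "(l,p) \<in> E" "nclose n E l p = 1" "nclose n E p l = n - 1"
    "(p,q) \<in> E" "nclose n E p q = 2" "nclose n E q p = n - 2" "E `` {p} = {l, q}" "q \<noteq> l"
    "(q,r) \<in> E" "nclose n E q r = 3" "nclose n E r q = n - 3"
proof -
  have l: "l < n" "deg E l = 1" using L unfolding Lv_def by auto
  obtain p where p: "E `` {l} = {p}" "(l,p) \<in> E" "nclose n E l p = 1" "nclose n E p l = n - 1"
    using leaf[OF l] by blast
  have pn: "p < n" using E_sub[OF p(2)] by auto
  have pl: "(p,l) \<in> E" using E_sym[OF p(2)] .
  have lp: "l \<noteq> p" using E_irr[OF p(2)] .
  have "p \<notin> Lv"
  proof
    assume "p \<in> Lv"
    then have "deg E p = 1" unfolding Lv_def by auto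
    then obtain x where x: "E `` {p} = {x}" unfolding deg_def by (metis card_1_singletonE)
    then have px: "E `` {p} = {l}" using pl by auto
    have "card {l, p} = n"
    proof (rule closed_all[of _ l])
      show "{l, p} \<subseteq> {..<n}" using l pn by auto
      show "l \<in> {l, p}" by simp
      fix a b assume "(a,b) \<in> E" "a \<in> {l, p}"
      then show "b \<in> {l, p}" using p(1) px by auto
    qed
    moreover have "card {l, p} \<le> 2" by (simp add: card_insert_if)
    ultimately show False using n9 by simp
  qed
  then have dp: "deg E p = 2" using deg_exact[OF U L2 pn] by simp
  obtain q where q: "E `` {p} = {l, q}" "q \<noteq> l" using two_nb[OF dp pl] by blast
  have pq: "(p,q) \<in> E" using q by auto
  have qn: "q < n" using E_sub[OF pq] by auto
  have qp: "q \<noteq> p" using E_irr[OF pq] by auto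
  have ncl2: "nclose n E p q = card {l, p}"
  proof (rule bridge)
    show "{l, p} \<subseteq> {..<n}" using l pn by auto
    show "p \<in> {l, p}" by simp
    show "q \<notin> {l, p}" using q qp by auto
    show "(p,q) \<in> E" by (rule pq)
    fix a b assume "(a,b) \<in> E" "a \<in> {l, p}" "b \<notin> {l, p}"
    then show "a = p \<and> b = q" using p(1) q(1) by auto
  qed
  then have n2: "nclose n E p q = 2" using lp by simp
  then have n2': "nclose n E q p = n - 2" using nclose_sum[OF pq] by simp
  have "q \<notin> Lv"
  proof
    assume "q \<in> Lv"
    then have "deg E q = 1" unfolding Lv_def by auto
    then obtain x where x: "E `` {q} = {x}" unfolding deg_def by (metis card_1_singletonE)
    then have qx: "E `` {q} = {p}" using E_sym[OF pq] by auto
    have "card {l, p, q} = n"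
    proof (rule closed_all[of _ l])
      show "{l, p, q} \<subseteq> {..<n}" using l pn qn by auto
      show "l \<in> {l, p, q}" by simp
      fix a b assume "(a,b) \<in> E" "a \<in> {l, p, q}"
      then show "b \<in> {l, p, q}" using p(1) q(1) qx by auto
    qed
    moreover have "card {l, p, q} \<le> 3" by (simp add: card_insert_if)
    ultimately show False using n9 by simp
  qed
  then have dq: "deg E q = 2" using deg_exact[OF U L2 qn] by simp
  obtain r where r: "E `` {q} = {p, r}" "r \<noteq> p" using two_nb[OF dq E_sym[OF pq]] by blast
  have qr: "(q,r) \<in> E" using r by auto
  have rq: "r \<noteq> q" using E_irr[OF qr] by auto
  have rl: "r \<noteq> l"
  proof
    assume "r = l"
    then have "(l,q) \<in> E" using E_sym[OF qr] by simp
    then have "q = p" using p(1) by auto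
    with qp show False by simp
  qed
  have ncl3: "nclose n E q r = card {l, p, q}"
  proof (rule bridge)
    show "{l, p, q} \<subseteq> {..<n}" using l pn qn by auto
    show "q \<in> {l, p, q}" by simp
    show "r \<notin> {l, p, q}" using r rq rl by auto
    show "(q,r) \<in> E" by (rule qr)
    fix a b assume "(a,b) \<in> E" "a \<in> {l, p, q}" "b \<notin> {l, p, q}"
    then show "a = q \<and> b = r" using p(1) q(1) r(1) by auto
  qed
  then have n3': "nclose n E q r = 3" using lp q(2) qp by simp
  then have "nclose n E r q = n - 3" using nclose_sum[OF qr] by simp
  with that p n2 n2' pq q qr n3' show ?thesis by blast
qed

end

context cbg begin

lemma twig_bound:
  assumes U: "card (UE E) = n - 1" and L2: "card Lv = 2" and n9: "n \<ge> 9"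
  shows "NGG n E \<ge> 2 * (1 / sqrt (real (n - 1))) + 2 * (1 / sqrt (2 * real (n - 2)))
     + 1 / sqrt (3 * real (n - 3)) + real (n - 6) * (1 / sqrt (real (N2 n)))"
proof -
  obtain l1 l2 where ll: "Lv = {l1, l2}" "l1 \<noteq> l2" using L2 by (meson card_2_iff)
  have l1L: "l1 \<in> Lv" and l2L: "l2 \<in> Lv" using ll by auto
  obtain p1 q1 r1 where c1: "(l1,p1) \<in> E" "nclose n E l1 p1 = 1" "nclose n E p1 l1 = n - 1"
    "(p1,q1) \<in> E" "nclose n E p1 q1 = 2" "nclose n E q1 p1 = n - 2" "E `` {p1} = {l1, q1}" "q1 \<noteq> l1"
    "(q1,r1) \<in> E" "nclose n E q1 r1 = 3" "nclose n E r1 q1 = n - 3"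
    by (rule chain[OF l1L U L2 n9])
  obtain p2 q2 r2 where c2: "(l2,p2) \<in> E" "nclose n E l2 p2 = 1" "nclose n E p2 l2 = n - 1"
    "(p2,q2) \<in> E" "nclose n E p2 q2 = 2" "nclose n E q2 p2 = n - 2" "E `` {p2} = {l2, q2}" "q2 \<noteq> l2"
    "(q2,r2) \<in> E" "nclose n E q2 r2 = 3" "nclose n E r2 q2 = n - 3"
    by (rule chain[OF l2L U L2 n9])
  have p12: "p1 \<noteq> p2"
  proof
    assume eq: "p1 = p2"
    have "l2 \<in> E `` {p1}" using E_sym[OF c2(1)] eq by auto
    then have "l2 = q1" using c1(7) ll(2) by auto
    then have "nclose n E p1 q1 = n - 1" using c2(3) eq by simp
    with c1(5) n9 show False by simp
  qed
  define es where "es = [(l1,p1),(l2,p2),(p1,q1),(p2,q2),(q1,r1)]"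
  have esE: "set es \<subseteq> E" unfolding es_def using c1(1,4,9) c2(1,4) by simp
  have d01: "und (l1,p1) \<noteq> und (l2,p2)"
    by (rule und_ne) (use c1(1,2,3,4,5,6,9,10,11) c2(1,2,3,4,5,6,9,10,11) n9 ll(2) p12 in simp_all)
  have d02: "und (l1,p1) \<noteq> und (p1,q1)"
    by (rule und_ne2) (use c1(1,2,3,4,5,6,9,10,11) c2(1,2,3,4,5,6,9,10,11) n9 in simp_all)
  have d03: "und (l1,p1) \<noteq> und (p2,q2)"
    by (rule und_ne2) (use c1(1,2,3,4,5,6,9,10,11) c2(1,2,3,4,5,6,9,10,11) n9 in simp_all)
  have d04: "und (l1,p1) \<noteq> und (q1,r1)"
    by (rule und_ne2) (use c1(1,2,3,4,5,6,9,10,11) c2(1,2,3,4,5,6,9,10,11) n9 in simp_all)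
  have d12: "und (l2,p2) \<noteq> und (p1,q1)"
    by (rule und_ne2) (use c1(1,2,3,4,5,6,9,10,11) c2(1,2,3,4,5,6,9,10,11) n9 in simp_all)
  have d13: "und (l2,p2) \<noteq> und (p2,q2)"
    by (rule und_ne2) (use c1(1,2,3,4,5,6,9,10,11) c2(1,2,3,4,5,6,9,10,11) n9 in simp_all)
  have d14: "und (l2,p2) \<noteq> und (q1,r1)"
    by (rule und_ne2) (use c1(1,2,3,4,5,6,9,10,11) c2(1,2,3,4,5,6,9,10,11) n9 in simp_all)
  have d23: "und (p1,q1) \<noteq> und (p2,q2)"
    by (rule und_ne) (use c1(1,2,3,4,5,6,9,10,11) c2(1,2,3,4,5,6,9,10,11) n9 ll(2) p12 in simp_all)
  have d24: "und (p1,q1) \<noteq> und (q1,r1)"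
    by (rule und_ne2) (use c1(1,2,3,4,5,6,9,10,11) c2(1,2,3,4,5,6,9,10,11) n9 in simp_all)
  have d34: "und (p2,q2) \<noteq> und (q1,r1)"
    by (rule und_ne2) (use c1(1,2,3,4,5,6,9,10,11) c2(1,2,3,4,5,6,9,10,11) n9 in simp_all)
  have d: "distinct (map und es)"
    unfolding es_def using d01 d02 d03 d04 d12 d13 d14 d23 d24 d34 by (simp add: eq_commute)
  define F where "F = set (map und es)"
  have FU: "F \<subseteq> UE E" unfolding F_def using esE und_in_U by auto
  have cF: "card F = 5" unfolding F_def using distinct_card[OF d] es_def by simp
  have "sum (tt n E) F = sum_list (map (tt n E) (map und es))"
    unfolding F_def using sum_list_distinct_conv_sum_set[OF d, of "tt n E"] by simp
  also have "\<dots> = sum_list (map (tt n E) es)" by (simp add: comp_def tt_und)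
  also have "\<dots> = 2 * (1 / sqrt (real (n - 1))) + 2 * (1 / sqrt (2 * real (n - 2)))
     + 1 / sqrt (3 * real (n - 3))"
    unfolding es_def tt_def using c1(2,3,5,6,10,11) c2(2,3,5,6) by (simp add: mult.commute)
  finally have sF: "sum (tt n E) F = 2 * (1 / sqrt (real (n - 1))) + 2 * (1 / sqrt (2 * real (n - 2)))
     + 1 / sqrt (3 * real (n - 3))" .
  have "card (UE E) - card F = n - 6" using U cF by simp
  with NGG_lb[OF FU] sF show ?thesis by simp
qed

end

lemma isqrt_le:
  fixes x y d :: real
  assumes "0 < x" "0 < y" "0 < d" "y \<le> d^2 * x"
  shows "1 / sqrt x \<le> d / sqrt y"
proof -
  have "sqrt y \<le> sqrt (d^2 * x)" using assms(4) by (rule real_sqrt_le_mono)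
  also have "\<dots> = d * sqrt x" using assms(3) by (simp add: real_sqrt_mult)
  finally have h: "sqrt y \<le> d * sqrt x" .
  have sx: "sqrt x > 0" "sqrt y > 0" using assms by auto
  have "1 / sqrt x = d / (d * sqrt x)" using assms(3) sx by simp
  also have "\<dots> \<le> d / sqrt y" using h sx assms(3)
    by (intro divide_left_mono) auto
  finally show ?thesis .
qed

lemma isqrt_ge:
  fixes x y d :: real
  assumes "0 < x" "0 < y" "0 < d" "d^2 * x \<le> y"
  shows "d / sqrt y \<le> 1 / sqrt x"
proof -
  have "sqrt (d^2 * x) \<le> sqrt y" using assms(4) by (rule real_sqrt_le_mono)
  moreover have "sqrt (d^2 * x) = d * sqrt x" using assms(3) by (simp add: real_sqrt_mult)
  ultimately have h: "d * sqrt x \<le> sqrt y" by simp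
  have sx: "sqrt x > 0" "sqrt y > 0" using assms by auto
  have "d / sqrt y \<le> d / (d * sqrt x)" using h sx assms(3)
    by (intro divide_left_mono) auto
  also have "\<dots> = 1 / sqrt x" using assms(3) sx by simp
  finally show ?thesis .
qed

lemma isqrt_num_lb:
  fixes x r :: real
  assumes "0 < x" "0 < r" "x \<le> r^2"
  shows "1 / r \<le> 1 / sqrt x"
proof -
  have "sqrt x \<le> r" using assms by (intro real_le_lsqrt) auto
  then show ?thesis using assms by (intro divide_left_mono) auto
qed

lemma isqrt_num_ub:
  fixes x r :: real
  assumes "0 < r" "r^2 \<le> x"
  shows "1 / sqrt x \<le> 1 / r"
proof -
  have "r \<le> sqrt x" using assms by (intro real_le_rsqrt) auto
  moreover have "0 < sqrt x" using calculation assms by linarith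
  ultimately show ?thesis using assms by (intro divide_left_mono) auto
qed

lemma num9: "5 * (1 / sqrt 20) \<le> 1 / sqrt 8 + 2 * (1 / sqrt 14) + 1 / sqrt (18::real)"
proof -
  have a: "(10000/28285::real) \<le> 1 / sqrt (8::real)" using isqrt_num_lb[of 8 "28285/10000"] by (simp add: power2_eq_square)
  have b: "(10000/37417::real) \<le> 1 / sqrt (14::real)" using isqrt_num_lb[of 14 "37417/10000"] by (simp add: power2_eq_square)
  have c: "(10000/42427::real) \<le> 1 / sqrt (18::real)" using isqrt_num_lb[of 18 "42427/10000"] by (simp add: power2_eq_square)
  have d: "1 / sqrt (20::real) \<le> (10000/44721::real)" using isqrt_num_ub[of "44721/10000" 20] by (simp add: power2_eq_square)
  show ?thesis using a b c d by linarith
qed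

lemma num11: "5 * (1 / sqrt 30) \<le> 1 / sqrt 10 + 2 * (1 / sqrt 18) + 1 / sqrt (24::real)"
proof -
  have a: "(1000/3163::real) \<le> 1 / sqrt (10::real)" using isqrt_num_lb[of 10 "3163/1000"] by (simp add: power2_eq_square)
  have b: "(1000/4243::real) \<le> 1 / sqrt (18::real)" using isqrt_num_lb[of 18 "4243/1000"] by (simp add: power2_eq_square)
  have c: "(1000/4899::real) \<le> 1 / sqrt (24::real)" using isqrt_num_lb[of 24 "4899/1000"] by (simp add: power2_eq_square)
  have d: "1 / sqrt (30::real) \<le> (1000/5477::real)" using isqrt_num_ub[of "5477/1000" 30] by (simp add: power2_eq_square)
  show ?thesis using a b c d by linarith
qed

lemma num13: "5 * (1 / sqrt 42) \<le> 1 / sqrt 12 + 2 * (1 / sqrt 22) + 1 / sqrt (30::real)"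
proof -
  have a: "(1000/3465::real) \<le> 1 / sqrt (12::real)" using isqrt_num_lb[of 12 "3465/1000"] by (simp add: power2_eq_square)
  have b: "(1000/4691::real) \<le> 1 / sqrt (22::real)" using isqrt_num_lb[of 22 "4691/1000"] by (simp add: power2_eq_square)
  have c: "(1000/5478::real) \<le> 1 / sqrt (30::real)" using isqrt_num_lb[of 30 "5478/1000"] by (simp add: power2_eq_square)
  have d: "1 / sqrt (42::real) \<le> (1000/6480::real)" using isqrt_num_ub[of "6480/1000" 42] by (simp add: power2_eq_square)
  show ?thesis using a b c d by linarith
qed


lemma min_NGG_eq: "min_NGG_bip n = (if even n then 2 else if n \<le> 15
   then 1 / sqrt (real n - 1) + (real n - 1) * (1 / sqrt (real (N2 n)))
   else (real n + 1) * (1 / sqrt (real (N2 n))))"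
  unfolding min_NGG_bip_def N2_def Let_def by (auto simp: algebra_simps)

lemma combine:
  fixes a c :: real
  assumes "0 \<le> c" "c \<le> a" "L0 \<le> L" "L \<le> m"
  shows "real L0 * a + real (m - L0) * c \<le> real L * a + real (m - L) * c"
proof -
  have "real L * a + real (m - L) * c - (real L0 * a + real (m - L0) * c) = (real L - real L0) * (a - c)"
    using assms by (simp add: of_nat_diff algebra_simps)
  moreover have "(real L - real L0) * (a - c) \<ge> 0" using assms by simp
  ultimately show ?thesis by linarith
qed

context cbg begin

lemma lower:
  assumes n8: "n \<ge> 8"
  shows "min_NGG_bip n \<le> NGG n E"
proof -
  define a where "a = 1 / sqrt (real n - 1)"
  define c where "c = 1 / sqrt (real (N2 n))"
  define m where "m = card (UE E)"
  define L where "L = card Lv"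
  have LB: "NGG n E \<ge> real L * a + real (m - L) * c"
    using leaf_bound unfolding a_def c_def m_def L_def .
  have Lm: "L \<le> m" using Lv_le_U unfolding L_def m_def .
  have mn: "m \<ge> n - 1" using card_U_ge unfolding m_def .
  have dsb: "2 * m + L \<ge> 2 * n" using deg_sum_bound unfolding m_def L_def .
  have c0: "c \<ge> 0" unfolding c_def by simp
  have gen: "NGG n E \<ge> real L0 * a + real (m - L0) * c" if "L0 \<le> L" "c \<le> a" for L0
    using combine[OF c0 that(2) that(1) Lm] LB by linarith
  show ?thesis
  proof (cases "even n")
    case True
    then obtain k where k: "n = 2 * k" by auto
    have k4: "k \<ge> 4" using n8 k by simp
    have N2: "N2 n = k * k" unfolding N2_def using k by simp
    have ck: "c * real k = 1" unfolding c_def N2 using k4 by (simp add: real_sqrt_mult)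
    have kk: "real k * real k \<ge> 4 * real k" using k4 by (simp add: mult_right_mono)
    have ca: "c \<le> a" unfolding a_def c_def N2
      using isqrt_ge[of "real n - 1" "real (k*k)" 1] k k4 kk by (simp add: algebra_simps)
    have goal: "min_NGG_bip n = 2" using True min_NGG_eq by simp
    show ?thesis
    proof (cases "m \<ge> n")
      case True
      have "NGG n E \<ge> real 0 * a + real (m - 0) * c" using gen[of 0] ca by simp
      moreover have "real m * c \<ge> real n * c" using True c0 by (simp add: mult_right_mono)
      moreover have "real n * c = 2 * (c * real k)" using k by simp
      moreover note ck
      ultimately show ?thesis using goal by simp
    next
      case False
      then have m: "m = n - 1" using mn by simp
      then have L2: "L \<ge> 2" using dsb k4 k by simp
      have NL: "NGG n E \<ge> real 2 * a + real (m - 2) * c" using gen[OF L2 ca] .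
      have q0: "(real k - 4) * (4 * real k - 2) \<ge> 0" using k4 by simp
      have q: "real k * 18 \<le> 9 + real k * (real k * 4)" using q0 by (simp add: algebra_simps)
      moreover have "3 / 2 * c \<le> a" unfolding a_def c_def N2 using q
        using isqrt_ge[of "real n - 1" "real (k*k)" "3/2"] k k4
        by (simp add: algebra_simps power2_eq_square)
      moreover have "real (m - 2) * c = 2 * (c * real k) - 3 * c"
        using m k k4 by (simp add: of_nat_diff algebra_simps)
      ultimately show ?thesis using goal ck NL by simp
    qed
  next
    case False
    then obtain k where k: "n = 2 * k + 1" using oddE by blast
    have k4: "k \<ge> 4" using n8 k False by presburger
    have N2: "N2 n = k * (k + 1)" unfolding N2_def using k by simp
    have an: "real n - 1 = 2 * real k" using k by simp
    have kk: "real k * real k \<ge> 4 * real k" using k4 by (simp add: mult_right_mono)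
    have ca: "c \<le> a" unfolding a_def c_def N2 an
      using isqrt_ge[of "2 * real k" "real (k*(k+1))" 1] k4 kk by (simp add: algebra_simps)
    have P3: "3 / 2 * c \<le> a" unfolding a_def c_def N2 an
      using isqrt_ge[of "2 * real k" "real (k*(k+1))" "3/2"] k4 kk by (simp add: algebra_simps power2_eq_square)
    have P1: "a \<le> 2 * c" if "k \<le> 7"
    proof -
      have "real k * real k \<le> 7 * real k" using that by (simp add: mult_right_mono)
      then show ?thesis unfolding a_def c_def N2 an
        using isqrt_le[of "2 * real k" "real (k*(k+1))" 2] k4 kk by (simp add: algebra_simps power2_eq_square)
    qed
    have P2: "2 * c \<le> a" if "k \<ge> 7"
    proof -
      have "real k * real k \<ge> 7 * real k" using that by (simp add: mult_right_mono)
      then show ?thesis unfolding a_def c_def N2 an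
        using isqrt_ge[of "2 * real k" "real (k*(k+1))" 2] k4 kk by (simp add: algebra_simps power2_eq_square)
    qed
    define K where "K = real k * c"
    have g0: "min_NGG_bip n = (if n \<le> 15 then a + (real n - 1) * c else (real n + 1) * c)"
      using False min_NGG_eq[of n] unfolding a_def c_def by presburger
    have e1: "(real n - 1) * c = 2 * K" "(real n + 1) * c = 2 * K + 2 * c"
      unfolding K_def using k by (simp_all add: algebra_simps)
    have e2: "n \<le> 15 \<longleftrightarrow> k \<le> 7" using k by simp
    have goal: "min_NGG_bip n = (if k \<le> 7 then a + 2 * K else 2 * K + 2 * c)"
      using g0 e1 e2 by simp
    show ?thesis
    proof (cases "m \<ge> n + 1")
      case True
      have "NGG n E \<ge> real 0 * a + real (m - 0) * c" using gen[of 0] ca by simp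
      moreover have "real m * c \<ge> real (n + 1) * c" using True c0 by (simp add: mult_right_mono)
      moreover have "real (n + 1) * c = 2 * K + 2 * c" using k unfolding K_def by (simp add: algebra_simps)
      ultimately show ?thesis using goal P1 by (auto split: if_splits)
    next
      case False
      show ?thesis
      proof (cases "m = n")
        case True
        have L1: "L \<ge> 1" using odd_leaf \<open>odd n\<close> True unfolding L_def m_def by simp
        have "NGG n E \<ge> real 1 * a + real (m - 1) * c" using gen[OF L1 ca] .
        moreover have "real (m - 1) * c = 2 * K" using True k unfolding K_def by simp
        ultimately show ?thesis using goal P2 by (auto split: if_splits)
      next
        case False
        then have m: "m = n - 1" using mn \<open>\<not> m \<ge> n + 1\<close> by simp
        then have L2: "L \<ge> 2" using dsb k by simp
        have NL: "NGG n E \<ge> real 2 * a + real (m - 2) * c" using gen[OF L2 ca] .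
        have m2: "real (m - 2) * c = 2 * K - 2 * c" using m k k4 unfolding K_def by (simp add: of_nat_diff algebra_simps)
        show ?thesis
        proof (cases "k \<ge> 7")
          case True
          then show ?thesis using NL m2 goal P2[OF True] by (auto split: if_splits)
        next
          case False
          show ?thesis
          proof (cases "L \<ge> 3")
            case True
            have NL3: "NGG n E \<ge> real 3 * a + real (m - 3) * c" using gen[OF True ca] .
            have "real (m - 3) * c = 2 * K - 3 * c" using m k k4 unfolding K_def by (simp add: of_nat_diff algebra_simps)
            then show ?thesis using NL3 goal False P3 by (auto split: if_splits)
          next
            case False
            then have "L = 2" using L2 by simp
            then have tw: "NGG n E \<ge> 2 * (1 / sqrt (real (n - 1))) + 2 * (1 / sqrt (2 * real (n - 2)))
               + 1 / sqrt (3 * real (n - 3)) + real (n - 6) * (1 / sqrt (real (N2 n)))"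
              using twig_bound m n8 k unfolding L_def m_def by simp
            have "n = 9 \<or> n = 11 \<or> n = 13" using k k4 \<open>\<not> k \<ge> 7\<close> by presburger
            then show ?thesis
            proof (elim disjE)
              assume n: "n = 9"
              show ?thesis using tw num9 unfolding n min_NGG_eq N2_def by simp
            next
              assume n: "n = 11"
              show ?thesis using tw num11 unfolding n min_NGG_eq N2_def by simp
            next
              assume n: "n = 13"
              show ?thesis using tw num13 unfolding n min_NGG_eq N2_def by simp
            qed
          qed
        qed
      qed
    qed
  qed
qed

end

context cbg begin

lemma GG_NGG: "GG n E = sqrt (real n - 2) * NGG n E"
proof -
  have "GG n E = (\<Sum>(u, v)\<in>{(u, v). (u, v) \<in> E \<and> u < v}.
      sqrt (real n - 2) * (1 / sqrt (real (nclose n E u v) * real (nclose n E v u))))"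
    unfolding GG_def
  proof (rule sum.cong)
    fix x assume x: "x \<in> {(u, v). (u, v) \<in> E \<and> u < v}"
    obtain u v where uv: "x = (u,v)" "(u,v) \<in> E" using x by auto
    have s: "real (nclose n E u v) + real (nclose n E v u) = real n"
      using nclose_sum[OF uv(2)] by (metis of_nat_add)
    show "(case x of (u, v) \<Rightarrow> sqrt ((real (nclose n E u v) + real (nclose n E v u) - 2)
            / (real (nclose n E u v) * real (nclose n E v u)))) =
          (case x of (u, v) \<Rightarrow> sqrt (real n - 2) * (1 / sqrt (real (nclose n E u v) * real (nclose n E v u))))"
      unfolding uv(1) using s by (simp add: real_sqrt_divide)
  qed simp
  also have "\<dots> = sqrt (real n - 2) * NGG n E"
    unfolding NGG_def by (simp add: sum_distrib_left case_prod_beta)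
  finally show ?thesis .
qed

lemma GG_div: "GG n E / sqrt (real n - 2) = NGG n E"
proof -
  have "sqrt (real n - 2) > 0" using n3 by simp
  then show ?thesis using GG_NGG by simp
qed

end

definition cyc :: "nat \<Rightarrow> (nat \<times> nat) set" where
  "cyc m = {(a,b). a < m \<and> b < m \<and> ((int b - int a) mod int m = 1 \<or> (int a - int b) mod int m = 1)}"

lemma mod1_char:
  assumes "a < m" "b < m" "m \<ge> 3"
  shows "(int b - int a) mod int m = 1 \<longleftrightarrow> b = a + 1 \<or> (a = m - 1 \<and> b = 0)"
proof (cases "a \<le> b")
  case True
  then have "(int b - int a) mod int m = int b - int a"
    using assms by (intro mod_pos_pos_trivial) auto
  then show ?thesis using True assms by auto
next
  case False
  have "(int b - int a) mod int m = (int b - int a + int m) mod int m" by simp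
  also have "\<dots> = int b - int a + int m"
    using assms False by (intro mod_pos_pos_trivial) auto
  finally show ?thesis using False assms by auto
qed

lemma cyc_char:
  assumes "m \<ge> 3"
  shows "(a,b) \<in> cyc m \<longleftrightarrow> a < m \<and> b < m \<and>
     (b = a + 1 \<or> a = b + 1 \<or> (a = m - 1 \<and> b = 0) \<or> (b = m - 1 \<and> a = 0))"
  unfolding cyc_def using mod1_char[of a m b] mod1_char[of b m a] assms by auto

lemma cyc_graph: "m \<ge> 3 \<Longrightarrow> graph_on m (cyc m)"
  unfolding graph_on_def sym_def irrefl_def using cyc_char by auto

lemma cyc_conn:
  assumes "m \<ge> 3"
  shows "connected_graph m (cyc m)"
proof -
  have step: "(i, i+1) \<in> cyc m" if "i + 1 < m" for i using cyc_char[OF assms] that by auto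
  have "(0, i) \<in> (cyc m)\<^sup>*" if "i < m" for i
    using that
  proof (induction i)
    case 0 then show ?case by simp
  next
    case (Suc i)
    then have "(0,i) \<in> (cyc m)\<^sup>*" by simp
    moreover have "(i, Suc i) \<in> cyc m" using step Suc.prems by simp
    ultimately show ?case by (rule rtrancl_into_rtrancl)
  qed
  moreover have "sym (cyc m)" using cyc_graph[OF assms] unfolding graph_on_def by auto
  ultimately have "(i, 0) \<in> (cyc m)\<^sup>*" if "i < m" for i
    using that by (metis rtrancl_converseD sym_conv_converse_eq)
  then show ?thesis unfolding connected_graph_def
    using \<open>\<And>i. i < m \<Longrightarrow> (0, i) \<in> (cyc m)\<^sup>*\<close> by (meson rtrancl_trans)
qed

lemma cyc_bip:
  assumes "m \<ge> 3" "even m"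
  shows "\<forall>(u,v)\<in>cyc m. (u \<in> {i. i < m \<and> even i}) \<noteq> (v \<in> {i. i < m \<and> even i})"
proof (clarify)
  fix u v assume e: "(u,v) \<in> cyc m"
  then have c: "u < m" "v < m" "v = u + 1 \<or> u = v + 1 \<or> (u = m - 1 \<and> v = 0) \<or> (v = m - 1 \<and> u = 0)"
    using cyc_char[OF assms(1)] by auto
  show "(u \<in> {i. i < m \<and> even i}) = (v \<in> {i. i < m \<and> even i}) \<Longrightarrow> False"
    using c assms(2) by auto
qed


lemma cyc_cbg: "m \<ge> 3 \<Longrightarrow> even m \<Longrightarrow> cbg m (cyc m) {i. i < m \<and> even i}"
  unfolding cbg_def using cyc_graph cyc_conn cyc_bip by auto

lemma cyc_refl:
  assumes m3: "m \<ge> 3" and ab: "(a,b) \<in> cyc m"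
    and \<sigma>_def: "\<sigma> = (\<lambda>x. nat ((int a + int b - int x) mod int m))"
  shows "\<And>x. x < m \<Longrightarrow> \<sigma> x < m \<and> \<sigma> (\<sigma> x) = x"
    and "\<And>x y. (x,y) \<in> cyc m \<Longrightarrow> (\<sigma> x, \<sigma> y) \<in> cyc m"
    and "\<sigma> a = b" and "\<sigma> b = a"
proof -
  have mp: "int m > 0" using m3 by simp
  have isg: "int (\<sigma> x) = (int a + int b - int x) mod int m" for x
    unfolding \<sigma>_def using mp by simp
  have lt: "\<sigma> x < m" for x
  proof -
    have "(int a + int b - int x) mod int m < int m" using mp by simp
    then show ?thesis using isg[of x] by linarith
  qed
  have ab': "a < m" "b < m" using ab unfolding cyc_def by auto
  show "\<sigma> x < m \<and> \<sigma> (\<sigma> x) = x" if "x < m" for x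
  proof -
    have "int (\<sigma> (\<sigma> x)) = (int a + int b - (int a + int b - int x) mod int m) mod int m"
      using isg by simp
    also have "\<dots> = (int a + int b - (int a + int b - int x)) mod int m" by (simp add: mod_diff_right_eq)
    also have "\<dots> = int x" using that by simp
    finally show ?thesis using lt by simp
  qed
  show "\<sigma> a = b" using isg[of a] ab' by (simp add: nat_eq_iff)
  show "\<sigma> b = a" using isg[of b] ab' by (simp add: nat_eq_iff)
  fix x y assume xy: "(x,y) \<in> cyc m"
  have d1: "(int (\<sigma> y) - int (\<sigma> x)) mod int m = (int x - int y) mod int m"
  proof -
    have "(int (\<sigma> y) - int (\<sigma> x)) mod int m =
      ((int a + int b - int y) mod int m - (int a + int b - int x) mod int m) mod int m" using isg by simp
    also have "\<dots> = ((int a + int b - int y) - (int a + int b - int x)) mod int m" by (simp add: mod_diff_eq)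
    finally show ?thesis by simp
  qed
  have d2: "(int (\<sigma> x) - int (\<sigma> y)) mod int m = (int y - int x) mod int m"
  proof -
    have "(int (\<sigma> x) - int (\<sigma> y)) mod int m =
      ((int a + int b - int x) mod int m - (int a + int b - int y) mod int m) mod int m" using isg by simp
    also have "\<dots> = ((int a + int b - int x) - (int a + int b - int y)) mod int m" by (simp add: mod_diff_eq)
    finally show ?thesis by simp
  qed
  show "(\<sigma> x, \<sigma> y) \<in> cyc m" using xy d1 d2 lt unfolding cyc_def by auto
qed

lemma cyc_nclose:
  assumes m3: "m \<ge> 3" and ev: "m = 2 * k" and ab: "(a,b) \<in> cyc m"
  shows "nclose m (cyc m) a b = k"
proof -
  interpret cbg m "cyc m" "{i. i < m \<and> even i}" using cyc_cbg m3 ev by simp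
  define \<sigma> where "\<sigma> = (\<lambda>x. nat ((int a + int b - int x) mod int m))"
  note r = cyc_refl[OF m3 ab \<sigma>_def]
  have ab': "a < m" "b < m" using E_sub[OF ab] by auto
  have "nclose m (cyc m) (\<sigma> a) (\<sigma> b) = nclose m (cyc m) a b"
    by (rule auto_nclose[OF r(1) r(2) ab'])
  then have "nclose m (cyc m) b a = nclose m (cyc m) a b" using r(3,4) by simp
  with nclose_sum[OF ab] ev show ?thesis by simp
qed

lemma cyc_UE: "m \<ge> 3 \<Longrightarrow> card (UE (cyc m)) = m"
proof -
  assume m3: "m \<ge> 3"
  define f where "f i = (if i + 1 < m then (i, i+1) else (0, m - 1))" for i
  have "bij_betw f {..<m} (UE (cyc m))"
  proof (rule bij_betw_imageI)
    show "inj_on f {..<m}" unfolding f_def inj_on_def using m3 by auto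
    show "f ` {..<m} = UE (cyc m)"
    proof (intro equalityI subsetI)
      fix e assume "e \<in> f ` {..<m}"
      then obtain i where "i < m" "e = f i" by auto
      then show "e \<in> UE (cyc m)" unfolding f_def UE_def using cyc_char[OF m3] m3 by auto
    next
      fix e assume e: "e \<in> UE (cyc m)"
      obtain a b where ab: "e = (a,b)" "(a,b) \<in> cyc m" "a < b" using e unfolding UE_def by auto
      then have c: "b < m" "b = a + 1 \<or> (b = m - 1 \<and> a = 0)" using cyc_char[OF m3] by auto
      show "e \<in> f ` {..<m}"
      proof (cases "b = a + 1")
        case True
        then have "f a = e" using ab c unfolding f_def by auto
        moreover have "a \<in> {..<m}" using c True by simp
        ultimately show ?thesis by (metis image_eqI)
      next
        case False
        then have "f (m - 1) = e" using ab c m3 unfolding f_def by auto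
        moreover have "m - 1 \<in> {..<m}" using m3 by simp
        ultimately show ?thesis by (metis image_eqI)
      qed
    qed
  qed
  then show ?thesis using bij_betw_same_card by fastforce
qed


lemma cyc_NGG:
  assumes "n = 2 * k" "k \<ge> 2"
  shows "NGG n (cyc n) = 2"
proof -
  have n3: "n \<ge> 3" using assms by simp
  have t: "tt n (cyc n) e = 1 / real k" if "e \<in> UE (cyc n)" for e
  proof -
    obtain a b where ab0: "e = (a,b)" by (cases e)
    then have ab: "e = (a,b)" "(a,b) \<in> cyc n" using that unfolding UE_def by auto
    have ba: "(b,a) \<in> cyc n" using ab(2) cyc_char[OF n3] by auto
    have "nclose n (cyc n) a b = k" "nclose n (cyc n) b a = k"
      using cyc_nclose[OF n3 assms(1)] ab ba by auto
    then show ?thesis unfolding tt_def ab by (simp add: real_sqrt_mult)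
  qed
  have "NGG n (cyc n) = (\<Sum>e\<in>UE (cyc n). 1 / real k)" unfolding NGG_tt using t by simp
  also have "\<dots> = real n / real k" using cyc_UE[OF n3] by simp
  also have "\<dots> = 2" using assms by simp
  finally show ?thesis .
qed

lemma ext_dist:
  assumes m3: "m \<ge> 3" and sub: "cyc m \<subseteq> G"
    and hom: "\<And>x y. (x,y) \<in> G \<Longrightarrow> (\<pi> x, \<pi> y) \<in> cyc m"
    and fx: "\<And>x. x < m \<Longrightarrow> \<pi> x = x"
    and a: "a < m" and b: "b < m"
  shows "gdist G a b = gdist (cyc m) a b"
proof -
  have rC: "(a,b) \<in> (cyc m)\<^sup>*" using cyc_conn[OF m3] a b unfolding connected_graph_def by auto
  then have rG: "(a,b) \<in> G\<^sup>*" using sub rtrancl_mono by blast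
  have "gdist G (id a) (id b) \<le> gdist (cyc m) a b"
    by (rule hom_gdist[OF _ rC]) (use sub in auto)
  moreover have "gdist (cyc m) (\<pi> a) (\<pi> b) \<le> gdist G a b"
    by (rule hom_gdist[OF hom rG])
  ultimately show ?thesis using fx a b by simp
qed

lemma ext_edge:
  assumes cb: "cbg (m + 1) G S" and m4: "m \<ge> 4" and ev: "m = 2 * k" and sub: "cyc m \<subseteq> G"
    and hom: "\<And>x y. (x,y) \<in> G \<Longrightarrow> (\<pi> x, \<pi> y) \<in> cyc m"
    and fx: "\<And>x. x < m \<Longrightarrow> \<pi> x = x"
    and ab: "(a,b) \<in> cyc m"
  shows "nclose (m + 1) G a b * nclose (m + 1) G b a = k * (k + 1)"
proof -
  have m3: "m \<ge> 3" using m4 by simp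
  have ab': "a < m" "b < m" using ab unfolding cyc_def by auto
  have ba: "(b,a) \<in> cyc m" using ab cyc_char[OF m3] by auto
  have side: "nclose (m + 1) G u v \<ge> k" if uv: "(u,v) \<in> cyc m" for u v
  proof -
    have uv': "u < m" "v < m" using uv unfolding cyc_def by auto
    have "{w \<in> {..<m}. gdist (cyc m) w u < gdist (cyc m) w v}
        \<subseteq> {w \<in> {..<m + 1}. gdist G w u < gdist G w v}"
      using ext_dist[OF m3 sub hom fx] uv' by auto
    then have "card {w \<in> {..<m}. gdist (cyc m) w u < gdist (cyc m) w v}
        \<le> card {w \<in> {..<m + 1}. gdist G w u < gdist G w v}"
      by (intro card_mono) auto
    then show ?thesis using cyc_nclose[OF m3 ev uv] unfolding nclose_def by simp
  qed
  have s: "nclose (m + 1) G a b + nclose (m + 1) G b a = m + 1"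
    using cbg.nclose_sum[OF cb] sub ab by auto
  have "nclose (m + 1) G a b \<ge> k" "nclose (m + 1) G b a \<ge> k" using side ab ba by auto
  then have "nclose (m + 1) G a b = k \<and> nclose (m + 1) G b a = k + 1 \<or>
             nclose (m + 1) G a b = k + 1 \<and> nclose (m + 1) G b a = k"
    using s ev by linarith
  then show ?thesis by auto
qed


definition pend :: "nat \<Rightarrow> (nat \<times> nat) set" where "pend m = cyc m \<union> {(0,m),(m,0)}"
definition twin :: "nat \<Rightarrow> (nat \<times> nat) set" where "twin m = cyc m \<union> {(0,m),(m,0),(2,m),(m,2)}"

lemma ext_conn:
  assumes m3: "m \<ge> 3" and sub: "cyc m \<subseteq> G" and e: "(0,m) \<in> G" "(m,0) \<in> G"
  shows "connected_graph (m + 1) G"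
proof -
  have r0: "(0,u) \<in> G\<^sup>* \<and> (u,0) \<in> G\<^sup>*" if "u < m + 1" for u
  proof (cases "u = m")
    case True then show ?thesis using e by auto
  next
    case False
    then have "u < m" using that by simp
    then have "(0,u) \<in> (cyc m)\<^sup>* \<and> (u,0) \<in> (cyc m)\<^sup>*"
      using cyc_conn[OF m3] m3 unfolding connected_graph_def by auto
    then show ?thesis using sub rtrancl_mono by blast
  qed
  show ?thesis unfolding connected_graph_def
  proof (intro allI impI)
    fix u v assume "u < m + 1" "v < m + 1"
    with r0[of u] r0[of v] show "(u,v) \<in> G\<^sup>*" by (meson rtrancl_trans)
  qed
qed

lemma cyc_sub: "cyc m \<subseteq> {..<m} \<times> {..<m}" unfolding cyc_def by auto

lemma pend_cbg:
  assumes m4: "m \<ge> 4" and ev: "even m"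
  shows "cbg (m + 1) (pend m) {i. i < m \<and> even i}"
proof -
  have m3: "m \<ge> 3" using m4 by simp
  have g: "graph_on m (cyc m)" using cyc_graph[OF m3] .
  have "graph_on (m + 1) (pend m)"
    using g cyc_sub[of m] m4 unfolding graph_on_def pend_def sym_def irrefl_def by auto
  moreover have "connected_graph (m + 1) (pend m)"
    by (rule ext_conn[OF m3]) (auto simp: pend_def)
  moreover have "\<forall>(u,v)\<in>pend m. (u \<in> {i. i < m \<and> even i}) \<noteq> (v \<in> {i. i < m \<and> even i})"
    using cyc_bip[OF m3 ev] m4 unfolding pend_def by auto
  ultimately show ?thesis unfolding cbg_def using m4 by auto
qed

lemma twin_cbg:
  assumes m4: "m \<ge> 4" and ev: "even m"
  shows "cbg (m + 1) (twin m) {i. i < m \<and> even i}"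
proof -
  have m3: "m \<ge> 3" using m4 by simp
  have g: "graph_on m (cyc m)" using cyc_graph[OF m3] .
  have "graph_on (m + 1) (twin m)"
    using g cyc_sub[of m] m4 unfolding graph_on_def twin_def sym_def irrefl_def by auto
  moreover have "connected_graph (m + 1) (twin m)"
    by (rule ext_conn[OF m3]) (auto simp: twin_def)
  moreover have "\<forall>(u,v)\<in>twin m. (u \<in> {i. i < m \<and> even i}) \<noteq> (v \<in> {i. i < m \<and> even i})"
    using cyc_bip[OF m3 ev] m4 unfolding twin_def by auto
  ultimately show ?thesis unfolding cbg_def using m4 by auto
qed

lemma pi_hom:
  assumes m4: "m \<ge> 4" and G: "G = pend m \<or> G = twin m"
  shows "(x,y) \<in> G \<Longrightarrow> ((if x = m then 1 else x), (if y = m then 1 else y)) \<in> cyc m"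
proof -
  have m3: "m \<ge> 3" using m4 by simp
  assume xy: "(x,y) \<in> G"
  have c01: "(0,1) \<in> cyc m" "(1,0) \<in> cyc m" "(2,1) \<in> cyc m" "(1,2) \<in> cyc m"
    using cyc_char[OF m3] m4 by auto
  show ?thesis
  proof (cases "(x,y) \<in> cyc m")
    case True
    then have "x < m" "y < m" unfolding cyc_def by auto
    then show ?thesis using True by simp
  next
    case False
    then show ?thesis using xy G c01 m4 unfolding pend_def twin_def by auto
  qed
qed


lemma UE_union: "UE (A \<union> B) = UE A \<union> UE B" unfolding UE_def by auto

lemma UE_cyc_sub: "UE (cyc m) \<subseteq> {..<m} \<times> {..<m}" unfolding UE_def cyc_def by auto

lemma cyc_terms:
  assumes m4: "m \<ge> 4" and ev: "m = 2 * k" and G: "G = pend m \<or> G = twin m"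
    and e: "e \<in> UE (cyc m)"
  shows "tt (m + 1) G e = 1 / sqrt (real (k * (k + 1)))"
proof -
  obtain a b where ab0: "e = (a,b)" by (cases e)
  then have ab: "(a,b) \<in> cyc m" using e unfolding UE_def by auto
  have cb: "cbg (m + 1) G {i. i < m \<and> even i}" using G pend_cbg twin_cbg m4 ev by auto
  have sub: "cyc m \<subseteq> G" using G unfolding pend_def twin_def by auto
  define \<pi> where "\<pi> x = (if x = m then 1 else x)" for x
  have hom: "(\<pi> x, \<pi> y) \<in> cyc m" if "(x,y) \<in> G" for x y
    unfolding \<pi>_def using pi_hom[OF m4 G that] .
  have fx: "\<pi> x = x" if "x < m" for x using that unfolding \<pi>_def by simp
  have "nclose (m + 1) G a b * nclose (m + 1) G b a = k * (k + 1)"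
    by (rule ext_edge[OF cb m4 ev sub hom fx ab])
  then show ?thesis unfolding tt_def ab0 by (metis fst_conv snd_conv of_nat_mult)
qed

lemma pend_NGG:
  assumes m4: "m \<ge> 4" and ev: "m = 2 * k" and n: "n = m + 1"
  shows "NGG n (pend m) = 1 / sqrt (real n - 1) + (real n - 1) * (1 / sqrt (real (N2 n)))"
proof -
  interpret cbg n "pend m" "{i. i < m \<and> even i}" using pend_cbg m4 ev n by simp
  have N2: "N2 n = k * (k + 1)" unfolding N2_def n ev by simp
  have U: "UE (pend m) = UE (cyc m) \<union> {(0,m)}"
    unfolding pend_def UE_union using m4 unfolding UE_def by auto
  have notin: "(0,m) \<notin> UE (cyc m)" using UE_cyc_sub by auto
  have fin: "finite (UE (cyc m))" using UE_cyc_sub finite_subset by blast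
  have "deg (pend m) m = 1"
  proof -
    have "pend m `` {m} = {0}" unfolding pend_def cyc_def by auto
    then show ?thesis unfolding deg_def by simp
  qed
  then obtain p where p: "pend m `` {m} = {p}" "nclose n (pend m) m p = 1" "nclose n (pend m) p m = n - 1"
    using leaf[of m] n by auto
  have p0: "p = 0" using p(1) unfolding pend_def cyc_def by auto
  have t0: "tt n (pend m) (0,m) = 1 / sqrt (real n - 1)"
    unfolding tt_def using p p0 n by (simp add: of_nat_diff)
  have "NGG n (pend m) = sum (tt n (pend m)) (UE (cyc m)) + tt n (pend m) (0,m)"
    unfolding NGG_tt U using notin fin by simp
  also have "sum (tt n (pend m)) (UE (cyc m)) = (\<Sum>e\<in>UE (cyc m). 1 / sqrt (real (k * (k + 1))))"
    using cyc_terms[OF m4 ev, of "pend m"] n by simp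
  also have "\<dots> = real m * (1 / sqrt (real (k * (k + 1))))" using cyc_UE m4 by simp
  finally show ?thesis using t0 N2 n by simp
qed

lemma twin_NGG:
  assumes m4: "m \<ge> 4" and ev: "m = 2 * k" and n: "n = m + 1"
  shows "NGG n (twin m) = (real n + 1) * (1 / sqrt (real (N2 n)))"
proof -
  interpret cbg n "twin m" "{i. i < m \<and> even i}" using twin_cbg m4 ev n by simp
  have m3: "m \<ge> 3" using m4 by simp
  have N2: "N2 n = k * (k + 1)" unfolding N2_def n ev by simp
  have U: "UE (twin m) = UE (cyc m) \<union> {(0,m),(2,m)}"
    unfolding twin_def UE_union using m4 unfolding UE_def by auto
  have notin: "(0,m) \<notin> UE (cyc m)" "(2,m) \<notin> UE (cyc m)" using UE_cyc_sub by auto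
  have fin: "finite (UE (cyc m))" using UE_cyc_sub finite_subset by blast
  define \<tau> where "\<tau> x = (if x = 1 then m else if x = m then 1 else x)" for x
  have inv: "\<tau> x < n \<and> \<tau> (\<tau> x) = x" if "x < n" for x using that m4 n unfolding \<tau>_def by auto
  have hom: "(\<tau> x, \<tau> y) \<in> twin m" if xy: "(x,y) \<in> twin m" for x y
  proof (cases "(x,y) \<in> cyc m")
    case True
    then have c: "x < m" "y < m" "y = x + 1 \<or> x = y + 1 \<or> (x = m - 1 \<and> y = 0) \<or> (y = m - 1 \<and> x = 0)"
      using cyc_char[OF m3] by auto
    show ?thesis
    proof (cases "x = 1 \<or> y = 1")
      case True
      then show ?thesis using c m4 unfolding \<tau>_def twin_def by auto
    next
      case False
      then have "\<tau> x = x" "\<tau> y = y" using c unfolding \<tau>_def by auto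
      then show ?thesis using \<open>(x,y) \<in> cyc m\<close> unfolding twin_def by simp
    qed
  next
    case False
    then have "(x,y) \<in> {(0,m),(m,0),(2,m),(m,2)}" using xy unfolding twin_def by auto
    moreover have "(0,1) \<in> cyc m" "(1,0) \<in> cyc m" "(2,1) \<in> cyc m" "(1,2) \<in> cyc m"
      using cyc_char[OF m3] m4 by auto
    ultimately show ?thesis using m4 unfolding \<tau>_def twin_def by auto
  qed
  have t: "tt n (twin m) (\<tau> u, \<tau> v) = tt n (twin m) (u, v)" if "u < n" "v < n" for u v
    unfolding tt_def using auto_nclose[OF inv hom that] auto_nclose[OF inv hom that(2,1)] by simp
  have "tt n (twin m) (0,1) = 1 / sqrt (real (k * (k + 1)))" "tt n (twin m) (1,2) = 1 / sqrt (real (k * (k + 1)))"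
    using cyc_terms[OF m4 ev, of "twin m"] n cyc_char[OF m3] m4 unfolding UE_def by auto
  moreover have "\<tau> 0 = 0" "\<tau> 1 = m" "\<tau> 2 = 2" using m4 unfolding \<tau>_def by auto
  ultimately have t0: "tt n (twin m) (0,m) = 1 / sqrt (real (k * (k + 1)))"
    and t2: "tt n (twin m) (m,2) = 1 / sqrt (real (k * (k + 1)))"
    using t[of 0 1] t[of 1 2] n m4 by auto
  have t2': "tt n (twin m) (2,m) = 1 / sqrt (real (k * (k + 1)))"
    using t2 unfolding tt_def by (simp add: mult.commute)
  have "NGG n (twin m) = sum (tt n (twin m)) (UE (cyc m)) + tt n (twin m) (0,m) + tt n (twin m) (2,m)"
    unfolding NGG_tt U using notin fin m4 by simp
  also have "sum (tt n (twin m)) (UE (cyc m)) = (\<Sum>e\<in>UE (cyc m). 1 / sqrt (real (k * (k + 1))))"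
    using cyc_terms[OF m4 ev, of "twin m"] n by simp
  also have "\<dots> = real m * (1 / sqrt (real (k * (k + 1))))" using cyc_UE m4 by simp
  finally show ?thesis using t0 t2' N2 n by (simp add: algebra_simps add_divide_distrib)
qed


lemma exists_opt:
  assumes n8: "n \<ge> 8"
  shows "\<exists>E S. cbg n E S \<and> NGG n E = min_NGG_bip n"
proof (cases "even n")
  case True
  then obtain k where k: "n = 2 * k" by auto
  have "cbg n (cyc n) {i. i < n \<and> even i}" using cyc_cbg n8 True by simp
  moreover have "NGG n (cyc n) = 2" using cyc_NGG[OF k] k n8 by simp
  moreover have "min_NGG_bip n = 2" using True min_NGG_eq by simp
  ultimately show ?thesis by metis
next
  case False
  then obtain k where k: "n = 2 * k + 1" using oddE by blast
  define m where "m = 2 * k"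
  have m4: "m \<ge> 4" using k n8 unfolding m_def by simp
  have nm: "n = m + 1" using k unfolding m_def by simp
  have evm: "even m" unfolding m_def by simp
  show ?thesis
  proof (cases "n \<le> 15")
    case True
    have "cbg n (pend m) {i. i < m \<and> even i}" using pend_cbg[OF m4 evm] nm by simp
    moreover have "NGG n (pend m) = min_NGG_bip n"
      using pend_NGG[OF m4 m_def nm] min_NGG_eq[of n] False True by simp
    ultimately show ?thesis by metis
  next
    case False
    have "cbg n (twin m) {i. i < m \<and> even i}" using twin_cbg[OF m4 evm] nm by simp
    moreover have "NGG n (twin m) = min_NGG_bip n"
      using twin_NGG[OF m4 m_def nm] min_NGG_eq[of n] False \<open>odd n\<close> by simp
    ultimately show ?thesis by metis
  qed
qed

lemma cbg_props:
  assumes "cbg n E S"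
  shows "graph_on n E" "connected_graph n E" "bipartite_graph E"
  using assms unfolding cbg_def bipartite_graph_def by auto

theorem corollary8:
  fixes n :: nat
  assumes "n \<ge> 8"
  shows "(\<exists>E. graph_on n E \<and> connected_graph n E \<and> bipartite_graph E
              \<and> NGG n E = min_NGG_bip n)
       \<and> (\<forall>E. graph_on n E \<and> connected_graph n E \<and> bipartite_graph E
              \<longrightarrow> min_NGG_bip n \<le> NGG n E)
       \<and> (\<exists>E. graph_on n E \<and> connected_graph n E \<and> bipartite_graph E
              \<and> GG n E / sqrt (real n - 2) = min_NGG_bip n)
       \<and> (\<forall>E. graph_on n E \<and> connected_graph n E \<and> bipartite_graph E
              \<longrightarrow> min_NGG_bip n \<le> GG n E / sqrt (real n - 2))"
proof -
  obtain E0 S0 where E0: "cbg n E0 S0" "NGG n E0 = min_NGG_bip n" using exists_opt[OF assms] by blast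
  have mk: "cbg n E S" if "graph_on n E" "connected_graph n E" "\<forall>(u,v)\<in>E. (u \<in> S) \<noteq> (v \<in> S)" for E S
    unfolding cbg_def using that assms by auto
  have low: "min_NGG_bip n \<le> NGG n E \<and> GG n E / sqrt (real n - 2) = NGG n E"
    if h: "graph_on n E" "connected_graph n E" "bipartite_graph E" for E
  proof -
    obtain S where S: "\<forall>(u,v)\<in>E. (u \<in> S) \<noteq> (v \<in> S)" using h(3) unfolding bipartite_graph_def by blast
    interpret cbg n E S using mk[OF h(1,2) S] .
    show ?thesis using lower[OF assms] GG_div by simp
  qed
  have g0: "GG n E0 / sqrt (real n - 2) = NGG n E0" using cbg.GG_div[OF E0(1)] .
  show ?thesis using E0 g0 cbg_props[OF E0(1)] low by metis
qed



end
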